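(* Let $p$ be a prime and $G$ a $p$-group of order $p^m$ with $|G/Z(G)|=p^3$. (1) If $G$ has no abelian maximal subgroup, then $$A_G(t)=\frac{1}{p^m}\left(\frac{p^{m-3}}{1-p^mt}+\frac{p^m-p^{m-3}}{1-p^{m-2}t}\right).$$ (2) If $G$ possesses an abelian maximal subgroup, then $$A_G(t)=\frac{1}{p^m}\left(\frac{p^{m-3}}{1-p^mt}+\frac{p^{m-1}-p^{m-3}}{1-p^{m-1}t}+\frac{p^m-p^{m-1}}{1-p^{m-2}t}\right).$$
   Context: For a finite group $G$ and $n\ge0$, let $\alpha_{G,n}$ be the number of orbits of $G$ acting on $G^n$ by simultaneous conjugation, and $A_G(t)=\sum_{n\ge0}\alpha_{G,n}t^n$, viewed as a rational function of $t$. *)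

theory Defs
  imports "HOL-Algebra.Algebra" "HOL-Computational_Algebra.Formal_Power_Series"
begin

definition group_center :: "('a, 'b) monoid_scheme \<Rightarrow> 'a set" where
  "group_center G = {z \<in> carrier G. \<forall>g \<in> carrier G. z \<otimes>\<^bsub>G\<^esub> g = g \<otimes>\<^bsub>G\<^esub> z}"

definition tuples :: "('a, 'b) monoid_scheme \<Rightarrow> nat \<Rightarrow> (nat \<Rightarrow> 'a) set" where
  "tuples G n = ({..<n} \<rightarrow>\<^sub>E carrier G)"

definition conj_tuple :: "('a, 'b) monoid_scheme \<Rightarrow> nat \<Rightarrow> 'a \<Rightarrow> (nat \<Rightarrow> 'a) \<Rightarrow> (nat \<Rightarrow> 'a)" where
  "conj_tuple G n g x = (\<lambda>i\<in>{..<n}. g \<otimes>\<^bsub>G\<^esub> x i \<otimes>\<^bsub>G\<^esub> inv\<^bsub>G\<^esub> g)"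

definition conj_rel :: "('a, 'b) monoid_scheme \<Rightarrow> nat \<Rightarrow> ((nat \<Rightarrow> 'a) \<times> (nat \<Rightarrow> 'a)) set" where
  "conj_rel G n = {(x, y). x \<in> tuples G n \<and> y \<in> tuples G n \<and>
                     (\<exists>g \<in> carrier G. y = conj_tuple G n g x)}"

definition alpha :: "('a, 'b) monoid_scheme \<Rightarrow> nat \<Rightarrow> nat" where
  "alpha G n = card (tuples G n // conj_rel G n)"

definition A_series :: "('a, 'b) monoid_scheme \<Rightarrow> real fps" where
  "A_series G = Abs_fps (\<lambda>n. real (alpha G n))"

definition maximal_subgroup :: "'a set \<Rightarrow> ('a, 'b) monoid_scheme \<Rightarrow> bool" where
  "maximal_subgroup H G \<longleftrightarrow> subgroup H G \<and> H \<noteq> carrier G \<and>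
     (\<forall>K. subgroup K G \<and> H \<subseteq> K \<longrightarrow> K = H \<or> K = carrier G)"

definition abelian_subset :: "'a set \<Rightarrow> ('a, 'b) monoid_scheme \<Rightarrow> bool" where
  "abelian_subset H G \<longleftrightarrow> (\<forall>x \<in> H. \<forall>y \<in> H. x \<otimes>\<^bsub>G\<^esub> y = y \<otimes>\<^bsub>G\<^esub> x)"

definition geom :: "real \<Rightarrow> real fps" where
  "geom c = inverse (1 - fps_const c * fps_X)"

end

theory Submission
  imports Defs
begin
unbundle fps_syntax


definition cent :: "('a, 'b) monoid_scheme \<Rightarrow> 'a \<Rightarrow> 'a set" where
  "cent G g = {x \<in> carrier G. x \<otimes>\<^bsub>G\<^esub> g = g \<otimes>\<^bsub>G\<^esub> x}"

definition CS :: "('a, 'b) monoid_scheme \<Rightarrow> 'a set \<Rightarrow> 'a set" where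
  "CS G S = {x \<in> carrier G. \<forall>s\<in>S. x \<otimes>\<^bsub>G\<^esub> s = s \<otimes>\<^bsub>G\<^esub> x}"

lemma geom_eq: "geom c = Abs_fps (\<lambda>n. c ^ n)"
  unfolding geom_def
proof (rule fps_inverse_unique)
  show "(1 - fps_const c * fps_X) * Abs_fps (\<lambda>n. c ^ n) = 1"
  proof (rule fps_ext)
    fix n
    show "((1 - fps_const c * fps_X) * Abs_fps (\<lambda>n. c ^ n)) $ n = (1::real fps) $ n"
      by (cases n) (simp_all add: algebra_simps mult.assoc fps_mult_left_const_nth)
  qed
qed

lemma series3:
  fixes a b d x y z P :: real
  assumes "\<And>n. F $ n = (a * x ^ n + b * y ^ n + d * z ^ n) / P"
  shows "F = fps_const (1 / P) *
     (fps_const a * geom x + fps_const b * geom y + fps_const d * geom z)"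
  by (rule fps_ext) (simp add: assms geom_eq algebra_simps fps_mult_left_const_nth add_divide_distrib)

context group begin

lemma commute_inv:
  assumes "x \<in> carrier G" "y \<in> carrier G" "x \<otimes> y = y \<otimes> x"
  shows "inv x \<otimes> y = y \<otimes> inv x"
proof -
  have "inv x \<otimes> y = inv x \<otimes> (y \<otimes> x) \<otimes> inv x" using assms(1,2) by (simp add: m_assoc)
  also have "\<dots> = inv x \<otimes> (x \<otimes> y) \<otimes> inv x" using assms(3) by simp
  also have "\<dots> = y \<otimes> inv x" using assms(1,2) by (simp add: m_assoc[symmetric])
  finally show ?thesis .
qed

lemma commute_mult:
  assumes "x \<in> carrier G" "y \<in> carrier G" "s \<in> carrier G"
    "x \<otimes> s = s \<otimes> x" "y \<otimes> s = s \<otimes> y"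
  shows "x \<otimes> y \<otimes> s = s \<otimes> (x \<otimes> y)"
proof -
  have "x \<otimes> y \<otimes> s = x \<otimes> (y \<otimes> s)" using assms(1-3) by (simp add: m_assoc)
  also have "\<dots> = x \<otimes> (s \<otimes> y)" using assms(5) by simp
  also have "\<dots> = (x \<otimes> s) \<otimes> y" using assms(1-3) by (simp add: m_assoc)
  also have "\<dots> = (s \<otimes> x) \<otimes> y" using assms(4) by simp
  also have "\<dots> = s \<otimes> (x \<otimes> y)" using assms(1-3) by (simp add: m_assoc)
  finally show ?thesis .
qed

lemma CS_subgroup:
  assumes "S \<subseteq> carrier G"
  shows "subgroup (CS G S) G"
proof (rule subgroupI)
  show "CS G S \<subseteq> carrier G" unfolding CS_def by auto
  have "\<one> \<in> CS G S" using assms unfolding CS_def by auto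
  then show "CS G S \<noteq> {}" by auto
next
  fix a assume a: "a \<in> CS G S"
  have "inv a \<otimes> s = s \<otimes> inv a" if "s \<in> S" for s
    using commute_inv[of a s] a that assms unfolding CS_def by auto
  then show "inv a \<in> CS G S" using a unfolding CS_def by auto
next
  fix a b assume a: "a \<in> CS G S" and b: "b \<in> CS G S"
  have "a \<otimes> b \<otimes> s = s \<otimes> (a \<otimes> b)" if "s \<in> S" for s
    using commute_mult[of a b s] a b that assms unfolding CS_def by auto
  then show "a \<otimes> b \<in> CS G S" using a b unfolding CS_def by auto
qed

lemma center_CS: "group_center G = CS G (carrier G)"
  unfolding group_center_def CS_def by simp

lemma cent_CS: "cent G g = CS G {g}"
  unfolding cent_def CS_def by simp

lemma center_subgroup: "subgroup (group_center G) G"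
  by (simp add: center_CS CS_subgroup)

lemma cent_subgroup: "g \<in> carrier G \<Longrightarrow> subgroup (cent G g) G"
  by (simp add: cent_CS CS_subgroup)

lemma center_sub_cent: "g \<in> carrier G \<Longrightarrow> group_center G \<subseteq> cent G g"
  unfolding group_center_def cent_def by auto

lemma self_in_cent: "g \<in> carrier G \<Longrightarrow> g \<in> cent G g"
  unfolding cent_def by auto

lemma cent_eq_carrier_iff:
  assumes g: "g \<in> carrier G"
  shows "cent G g = carrier G \<longleftrightarrow> g \<in> group_center G"
proof
  assume a: "cent G g = carrier G"
  have "g \<otimes> h = h \<otimes> g" if "h \<in> carrier G" for h
  proof -
    have "h \<in> cent G g" using a that by simp
    then have "h \<otimes> g = g \<otimes> h" unfolding cent_def by simp
    then show ?thesis by (rule sym)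
  qed
  then show "g \<in> group_center G" using g unfolding group_center_def by simp
next
  assume "g \<in> group_center G"
  then show "cent G g = carrier G" unfolding group_center_def cent_def by auto
qed


lemma conj_tuple_in:
  assumes "g \<in> carrier G" "x \<in> tuples G n"
  shows "conj_tuple G n g x \<in> tuples G n"
  using assms unfolding tuples_def conj_tuple_def by (auto simp: PiE_iff)

lemma conj_tuple_mult:
  assumes "g \<in> carrier G" "h \<in> carrier G" "x \<in> tuples G n"
  shows "conj_tuple G n (g \<otimes> h) x = conj_tuple G n g (conj_tuple G n h x)"
  using assms unfolding tuples_def conj_tuple_def
  by (auto simp: PiE_iff m_assoc inv_mult_group intro!: ext)

lemma conj_tuple_one:
  assumes "x \<in> tuples G n"
  shows "conj_tuple G n \<one> x = x"
  using assms unfolding tuples_def conj_tuple_def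
  by (auto simp: PiE_iff extensional_def intro!: ext)

lemma conj_fix_iff:
  assumes "g \<in> carrier G" "x \<in> carrier G"
  shows "g \<otimes> x \<otimes> inv g = x \<longleftrightarrow> x \<otimes> g = g \<otimes> x"
  using inv_solve_right'[of x "g \<otimes> x" g] assms by (metis m_closed)

definition "act n = (\<lambda>g. restrict (conj_tuple G n g) (tuples G n))"

lemma act_Bij:
  assumes "g \<in> carrier G"
  shows "act n g \<in> Bij (tuples G n)"
  unfolding Bij_def act_def
proof (intro IntI CollectI)
  show "restrict (conj_tuple G n g) (tuples G n) \<in> extensional (tuples G n)" by simp
  show "bij_betw (restrict (conj_tuple G n g) (tuples G n)) (tuples G n) (tuples G n)"
proof (rule bij_betw_byWitness[where f'="conj_tuple G n (inv g)"])
  show "\<forall>a\<in>tuples G n. conj_tuple G n (inv g) (restrict (conj_tuple G n g) (tuples G n) a) = a"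
    using assms by (auto simp: conj_tuple_mult[symmetric] conj_tuple_one)
  show "\<forall>a'\<in>tuples G n. restrict (conj_tuple G n g) (tuples G n) (conj_tuple G n (inv g) a') = a'"
    using assms by (auto simp: conj_tuple_in conj_tuple_mult[symmetric] conj_tuple_one)
  show "restrict (conj_tuple G n g) (tuples G n) ` tuples G n \<subseteq> tuples G n"
    using assms by (auto simp: conj_tuple_in)
  show "conj_tuple G n (inv g) ` tuples G n \<subseteq> tuples G n"
    using assms by (auto simp: conj_tuple_in)
qed
qed

lemma act_action: "group_action G (tuples G n) (act n)"
  unfolding group_action_def group_hom_def group_hom_axioms_def
proof (intro conjI)
  show "group G" by (rule is_group)
  show "group (BijGroup (tuples G n))" by (rule group_BijGroup)
  show "act n \<in> hom G (BijGroup (tuples G n))"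
  proof (rule homI)
    fix g assume "g \<in> carrier G" then show "act n g \<in> carrier (BijGroup (tuples G n))"
      by (simp add: BijGroup_def act_Bij)
  next
    fix g h assume gh: "g \<in> carrier G" "h \<in> carrier G"
    have "act n (g \<otimes> h) = compose (tuples G n) (act n g) (act n h)"
      using gh by (auto simp: act_def compose_def conj_tuple_mult conj_tuple_in intro!: ext)
    then show "act n (g \<otimes> h) = act n g \<otimes>\<^bsub>BijGroup (tuples G n)\<^esub> act n h"
      using gh by (simp add: BijGroup_def act_Bij)
  qed
qed

lemma orbit_eq:
  assumes "x \<in> tuples G n"
  shows "orbit G (act n) x = conj_rel G n `` {x}"
  using assms unfolding orbit_def conj_rel_def act_def
  by (auto simp: conj_tuple_in)

lemma orbits_eq: "orbits G (tuples G n) (act n) = tuples G n // conj_rel G n"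
proof -
  have "orbits G (tuples G n) (act n) = (\<lambda>x. orbit G (act n) x) ` tuples G n"
    unfolding orbits_def by auto
  also have "\<dots> = (\<lambda>x. conj_rel G n `` {x}) ` tuples G n"
    by (rule image_cong) (simp_all add: orbit_eq)
  finally show ?thesis unfolding quotient_def by auto
qed

lemma invariants_eq:
  assumes "g \<in> carrier G"
  shows "invariants (tuples G n) (act n) g = ({..<n} \<rightarrow>\<^sub>E cent G g)"
proof -
  have "x \<in> tuples G n \<and> conj_tuple G n g x = x \<longleftrightarrow> x \<in> ({..<n} \<rightarrow>\<^sub>E cent G g)" for x
  proof
    assume a: "x \<in> tuples G n \<and> conj_tuple G n g x = x"
    show "x \<in> ({..<n} \<rightarrow>\<^sub>E cent G g)"
    proof (unfold PiE_iff, intro conjI ballI)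
      fix i assume i: "i \<in> {..<n}"
      have xi: "x i \<in> carrier G" using a i by (auto simp: tuples_def)
      have c1: "conj_tuple G n g x i = x i" using conjunct2[OF a] by (rule fun_cong)
      have c2: "conj_tuple G n g x i = g \<otimes> x i \<otimes> inv g" using i by (simp add: conj_tuple_def)
      have "g \<otimes> x i \<otimes> inv g = x i" using trans[OF c2[symmetric] c1] .
      then have e: "x i \<otimes> g = g \<otimes> x i" by (rule iffD1[OF conj_fix_iff[OF assms xi]])
      show "x i \<in> cent G g" unfolding cent_def mem_Collect_eq using xi e by (rule conjI)
    next
      show "x \<in> extensional {..<n}" using a unfolding tuples_def PiE_def by blast
    qed
  next
    assume a: "x \<in> ({..<n} \<rightarrow>\<^sub>E cent G g)"
    then have t: "x \<in> tuples G n" by (auto simp: tuples_def cent_def PiE_iff)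
    have "conj_tuple G n g x = x"
    proof (rule ext)
      fix i show "conj_tuple G n g x i = x i"
      proof (cases "i < n")
        case True
        then have xc: "x i \<in> cent G g" using a by (auto simp: PiE_iff)
        have xi: "x i \<in> carrier G" using xc unfolding cent_def by blast
        have e: "x i \<otimes> g = g \<otimes> x i" using xc unfolding cent_def by blast
        have c3: "g \<otimes> x i \<otimes> inv g = x i" by (rule iffD2[OF conj_fix_iff[OF assms xi] e])
        have c2: "conj_tuple G n g x i = g \<otimes> x i \<otimes> inv g" using True by (simp add: conj_tuple_def)
        show ?thesis using trans[OF c2 c3] .
      next
        case False then show ?thesis using a by (simp add: conj_tuple_def PiE_iff extensional_def)
      qed
    qed
    then show "x \<in> tuples G n \<and> conj_tuple G n g x = x" using t by simp
  qed
  then have *: "{x. x \<in> tuples G n \<and> conj_tuple G n g x = x} = ({..<n} \<rightarrow>\<^sub>E cent G g)"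
    by blast
  have "invariants (tuples G n) (act n) g = {x. x \<in> tuples G n \<and> conj_tuple G n g x = x}"
    unfolding invariants_def act_def by (intro Collect_cong) simp
  with * show ?thesis by simp
qed

lemma alpha_burnside:
  assumes "finite (carrier G)"
  shows "alpha G n * order G = (\<Sum>g\<in>carrier G. card (cent G g) ^ n)"
proof -
  have fin: "finite (tuples G n)" using assms by (simp add: tuples_def finite_PiE)
  have "card (orbits G (tuples G n) (act n)) * order G
        = (\<Sum>g\<in>carrier G. card (invariants (tuples G n) (act n) g))"
    by (rule group_action.burnside[OF act_action assms fin])
  also have "\<dots> = (\<Sum>g\<in>carrier G. card (cent G g) ^ n)"
    by (rule sum.cong) (simp_all add: invariants_eq card_PiE)
  finally show ?thesis by (simp add: alpha_def orbits_eq)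
qed


end

locale pgroup = group G for G (structure) +
  fixes p m :: nat
  assumes prime_p: "Factorial_Ring.prime p" and fin: "finite (carrier G)"
    and ordG: "order G = p ^ m"
begin

lemma p_gt1: "p > 1" using prime_p prime_gt_1_nat by blast

lemma card_sub: "subgroup H G \<Longrightarrow> card H dvd p ^ m"
  by (metis dvd_triv_right lagrange ordG)

lemma card_sub_pow: "subgroup H G \<Longrightarrow> \<exists>k\<le>m. card H = p ^ k"
  using card_sub divides_primepow_nat prime_p by metis

lemma sub_dvd:
  assumes "subgroup K G" "subgroup H G" "K \<subseteq> H"
  shows "card K dvd card H"
proof -
  interpret H: group "G\<lparr>carrier := H\<rparr>" using subgroup.subgroup_is_group[OF assms(2) is_group] .
  have "subgroup K (G\<lparr>carrier := H\<rparr>)" by (rule subgroup_incl[OF assms])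
  then have "card (rcosets\<^bsub>G\<lparr>carrier := H\<rparr>\<^esub> K) * card K = order (G\<lparr>carrier := H\<rparr>)"
    by (rule H.lagrange)
  then show ?thesis by (simp add: order_def) (metis dvd_triv_right)
qed

lemma finite_sub: "subgroup H G \<Longrightarrow> finite H"
  using fin subgroup.subset finite_subset by metis

lemma sub_strict:
  assumes "subgroup K G" "subgroup H G" "K \<subseteq> H" "K \<noteq> H"
  shows "p * card K \<le> card H"
proof -
  obtain i where i: "card K = p ^ i" using card_sub_pow[OF assms(1)] by blast
  obtain j where j: "card H = p ^ j" using card_sub_pow[OF assms(2)] by blast
  have "card K < card H" using psubset_card_mono[OF finite_sub[OF assms(2)]] assms(3,4) by blast
  then have "i < j" using i j p_gt1 by (simp add: power_strict_increasing_iff)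
  then have "p ^ Suc i \<le> p ^ j" using p_gt1 by (intro power_increasing) simp_all
  then show ?thesis using i j by simp
qed

lemma sub_card_eq:
  assumes "subgroup K G" "subgroup H G" "K \<subseteq> H" "card K = card H"
  shows "K = H"
  using card_subset_eq[OF finite_sub[OF assms(2)] assms(3,4)] .

lemma sub_card_full:
  assumes "subgroup H G" "card H = p ^ m"
  shows "H = carrier G"
  using sub_card_eq[OF assms(1) subgroup_self subgroup.subset[OF assms(1)]] assms(2) ordG
  by (simp add: order_def)

lemma normalizer_grows:
  assumes H: "subgroup H G" "H \<noteq> carrier G"
  shows "\<exists>x\<in>carrier G. x \<notin> H \<and> (\<forall>h\<in>H. x \<otimes> h \<otimes> inv x \<in> H)"
proof -
  let ?E = "rcosets H"
  let ?HG = "G\<lparr>carrier := H\<rparr>"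
  define \<psi> where "\<psi> = (\<lambda>h. \<lambda>C\<in>?E. C #> inv h)"
  interpret HG: group ?HG using subgroup.subgroup_is_group[OF H(1) is_group] .
  have Hsub: "H \<subseteq> carrier G" using H(1) subgroup.subset by blast
  have Ecar: "C \<subseteq> carrier G" if "C \<in> ?E" for C
    using subgroup.rcosets_carrier[OF H(1) is_group that] .
  have rc_in: "C #> x \<in> ?E" if Cx: "C \<in> ?E" "x \<in> carrier G" for C x
  proof -
    obtain y where y: "y \<in> carrier G" "C = H #> y" using Cx(1) unfolding RCOSETS_def by auto
    have "C #> x = H #> (y \<otimes> x)" using y Cx(2) Hsub by (simp add: coset_mult_assoc)
    then show ?thesis using y Cx(2) Hsub by (simp add: rcosetsI)
  qed
  have hc: "h \<in> carrier G" if "h \<in> H" for h using that Hsub by blast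
  have inv_cancel: "C #> inv h #> h = C" "C #> h #> inv h = C" if "C \<in> ?E" "h \<in> H" for C h
    using that Ecar[OF that(1)] hc[OF that(2)] by (simp_all add: coset_mult_assoc)
  have act: "group_action ?HG ?E \<psi>"
    unfolding group_action_def group_hom_def group_hom_axioms_def
  proof (intro conjI)
    show "group ?HG" by (rule HG.is_group)
    show "group (BijGroup ?E)" by (rule group_BijGroup)
    have bij: "\<psi> h \<in> Bij ?E" if h: "h \<in> H" for h
      unfolding Bij_def
    proof (intro IntI CollectI)
      show "\<psi> h \<in> extensional ?E" unfolding \<psi>_def by simp
      show "bij_betw (\<psi> h) ?E ?E"
      proof (rule bij_betw_byWitness[where f'="\<lambda>C. C #> h"])
        show "\<forall>a\<in>?E. \<psi> h a #> h = a" unfolding \<psi>_def using inv_cancel h by simp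
        show "\<forall>a'\<in>?E. \<psi> h (a' #> h) = a'" unfolding \<psi>_def using inv_cancel h rc_in hc by simp
        show "\<psi> h ` ?E \<subseteq> ?E" unfolding \<psi>_def using rc_in h hc by auto
        show "(\<lambda>C. C #> h) ` ?E \<subseteq> ?E" using rc_in h hc by auto
      qed
    qed
    show "\<psi> \<in> hom ?HG (BijGroup ?E)"
    proof (rule homI)
      fix h assume "h \<in> carrier ?HG" then show "\<psi> h \<in> carrier (BijGroup ?E)"
        using bij by (simp add: BijGroup_def)
    next
      fix h1 h2 assume hh: "h1 \<in> carrier ?HG" "h2 \<in> carrier ?HG"
      then have hh': "h1 \<in> H" "h2 \<in> H" by simp_all
      have "\<psi> (h1 \<otimes> h2) = compose ?E (\<psi> h1) (\<psi> h2)"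
      proof (rule ext)
        fix C show "\<psi> (h1 \<otimes> h2) C = compose ?E (\<psi> h1) (\<psi> h2) C"
        proof (cases "C \<in> ?E")
          case True
          have "C #> inv (h1 \<otimes> h2) = C #> inv h2 #> inv h1"
            using True Ecar[OF True] hc[OF hh'(1)] hc[OF hh'(2)]
            by (simp add: coset_mult_assoc inv_mult_group)
          then show ?thesis using True rc_in hc hh' unfolding \<psi>_def compose_def by simp
        next
          case False then show ?thesis unfolding \<psi>_def compose_def by simp
        qed
      qed
      then show "\<psi> (h1 \<otimes>\<^bsub>?HG\<^esub> h2) = \<psi> h1 \<otimes>\<^bsub>BijGroup ?E\<^esub> \<psi> h2"
        using bij hh' by (simp add: BijGroup_def)
    qed
  qed
  interpret A: group_action ?HG ?E \<psi> by (rule act)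
  have finE: "finite ?E"
  proof -
    have "?E \<subseteq> Pow (carrier G)" using Ecar by auto
    then show ?thesis using fin finite_Pow_iff finite_subset by metis
  qed
  have finO: "finite (orbits ?HG ?E \<psi>)"
  proof -
    have "orbits ?HG ?E \<psi> \<subseteq> Pow ?E" using A.orbits_coverture by auto
    then show ?thesis using finE finite_Pow_iff finite_subset by metis
  qed
  have orbpow: "\<exists>j. card orb = p ^ j" if oo: "orb \<in> orbits ?HG ?E \<psi>" for orb
  proof -
    obtain C where C: "C \<in> ?E" "orb = orbit ?HG \<psi> C" using oo unfolding orbits_def by auto
    have "card orb * card (stabilizer ?HG \<psi> C) = order ?HG"
      using A.orbit_stabilizer_theorem[OF C(1)] C(2) by simp
    then have "card orb dvd card H" by (simp add: order_def) (metis dvd_triv_left)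
    then have "card orb dvd p ^ m" using card_sub[OF H(1)] dvd_trans by blast
    then show ?thesis using divides_primepow_nat[OF prime_p] by blast
  qed
  have sumE: "(\<Sum>orb\<in>orbits ?HG ?E \<psi>. card orb) = card ?E"
    using A.disjoint_sum[OF finE, of "\<lambda>_. 1::nat"] by simp
  obtain k where k: "k \<le> m" "card H = p ^ k" using card_sub_pow[OF H(1)] by blast
  have "k \<noteq> m" using sub_card_full[OF H(1)] k H(2) by blast
  then have km: "k < m" using k by simp
  have "card ?E * p ^ k = p ^ m" using lagrange[OF H(1)] k ordG by simp
  moreover have "p ^ m = p ^ (m - k) * p ^ k" using km by (simp add: power_add[symmetric])
  ultimately have "card ?E = p ^ (m - k)" using p_gt1 by simp
  then have pE: "p dvd card ?E" using km by simp
  define F where "F = {orb \<in> orbits ?HG ?E \<psi>. card orb = 1}"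
  have FO: "F \<subseteq> orbits ?HG ?E \<psi>" unfolding F_def by auto
  have "p dvd (\<Sum>orb\<in>orbits ?HG ?E \<psi> - F. card orb)"
  proof (rule dvd_sum)
    fix orb assume "orb \<in> orbits ?HG ?E \<psi> - F"
    then have o: "orb \<in> orbits ?HG ?E \<psi>" "card orb \<noteq> 1" unfolding F_def by auto
    obtain j where "card orb = p ^ j" using orbpow[OF o(1)] by blast
    then show "p dvd card orb" using o(2) by (cases j) simp_all
  qed
  moreover have "(\<Sum>orb\<in>orbits ?HG ?E \<psi>. card orb)
      = (\<Sum>orb\<in>orbits ?HG ?E \<psi> - F. card orb) + (\<Sum>orb\<in>F. card orb)"
    using sum.subset_diff[OF FO finO] by simp
  moreover have "(\<Sum>orb\<in>F. card orb) = card F" unfolding F_def by simp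
  ultimately have pF: "p dvd card F" using pE sumE by (metis dvd_add_right_iff)
  have HE: "H \<in> ?E" using rcosetsI[OF Hsub one_closed] Hsub by simp
  have orbH: "orbit ?HG \<psi> H = {H}"
  proof -
    have "\<psi> h H = H" if "h \<in> H" for h
      using HE coset_join2[OF inv_closed[OF hc[OF that]] H(1) subgroup.m_inv_closed[OF H(1) that]]
      unfolding \<psi>_def by simp
    then have "(\<lambda>h. \<psi> h H) ` H = (\<lambda>h. H) ` H" by (rule image_cong[OF refl])
    moreover have "\<one> \<in> H" using H(1) subgroup.one_closed by blast
    moreover have "orbit ?HG \<psi> H = (\<lambda>h. \<psi> h H) ` H" unfolding orbit_def by auto
    ultimately show ?thesis by auto
  qed
  have "orbit ?HG \<psi> H \<in> orbits ?HG ?E \<psi>" unfolding orbits_def using HE by blast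
  then have HF: "{H} \<in> F" unfolding F_def using orbH by simp
  have finF: "finite F" using finO FO finite_subset by blast
  have "card F \<noteq> 0" using HF finF by auto
  then have "card F \<ge> p" using pF by (simp add: dvd_imp_le)
  then have "card F \<ge> 2" using p_gt1 by simp
  then have "card (F - {{H}}) \<ge> 1" using HF finF by simp
  then have "F - {{H}} \<noteq> {}" by (metis card.empty not_one_le_zero)
  then obtain orb where orb0: "orb \<in> F - {{H}}" by blast
  then have orb: "orb \<in> F" "orb \<noteq> {H}" by auto
  obtain C where C: "C \<in> ?E" "orb = orbit ?HG \<psi> C" using orb(1) unfolding F_def orbits_def by auto
  have "C \<in> orb" using A.orbit_refl[OF C(1)] C(2) by simp
  moreover have "card orb = 1" using orb(1) unfolding F_def by simp
  ultimately have orbC: "orb = {C}" by (metis card_1_singletonE singletonD)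
  have CH: "C \<noteq> H" using orb(2) orbC by simp
  obtain x where x: "x \<in> carrier G" "C = H #> x" using C(1) unfolding RCOSETS_def by auto
  have xH: "x \<notin> H" using coset_join2[OF x(1) H(1)] x(2) CH by blast
  have "x \<otimes> h \<otimes> inv x \<in> H" if h: "h \<in> H" for h
  proof -
    have ih: "inv h \<in> H" using subgroup.m_inv_closed[OF H(1) h] .
    have "\<psi> (inv h) C \<in> orbit ?HG \<psi> C" unfolding orbit_def using ih by auto
    then have "\<psi> (inv h) C \<in> orb" using C(2) by simp
    then have "\<psi> (inv h) C = C" using orbC by simp
    then have "C #> h = C" using C(1) hc[OF h] unfolding \<psi>_def by simp
    then have "H #> (x \<otimes> h) = H #> x" using x Hsub hc[OF h] by (simp add: coset_mult_assoc)
    moreover have "x \<otimes> h \<in> H #> (x \<otimes> h)" using rcos_self[OF _ H(1)] x(1) hc[OF h] by simp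
    ultimately have "x \<otimes> h \<in> H #> x" by simp
    then obtain h' where h': "h' \<in> H" "x \<otimes> h = h' \<otimes> x" unfolding r_coset_def by auto
    have "x \<otimes> h \<otimes> inv x = h' \<otimes> x \<otimes> inv x" using h'(2) by simp
    also have "\<dots> = h'" using x(1) hc[OF h'(1)] by (simp add: m_assoc)
    finally show ?thesis using h'(1) by simp
  qed
  then show ?thesis using x(1) xH by blast
qed

lemma finite_rcosets: "subgroup H G \<Longrightarrow> finite (rcosets H)"
proof -
  assume H: "subgroup H G"
  have "rcosets H \<subseteq> Pow (carrier G)"
    using subgroup.rcosets_carrier[OF H is_group] by auto
  then show ?thesis using fin finite_Pow_iff finite_subset by metis
qed

lemma maximal_normal:
  assumes A: "maximal_subgroup A G"
  shows "A \<lhd> G"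
proof -
  have As: "subgroup A G" "A \<noteq> carrier G" using A unfolding maximal_subgroup_def by auto
  have Asub: "A \<subseteq> carrier G" using As(1) subgroup.subset by blast
  have finA: "finite A" using finite_sub[OF As(1)] .
  obtain x where x: "x \<in> carrier G" "x \<notin> A" "\<forall>a\<in>A. x \<otimes> a \<otimes> inv x \<in> A"
    using normalizer_grows[OF As] by blast
  define N where "N = {y \<in> carrier G. \<forall>a\<in>A. y \<otimes> a \<otimes> inv y \<in> A}"
  have Ninv: "inv y \<otimes> a \<otimes> y \<in> A" if y: "y \<in> N" and a: "a \<in> A" for y a
  proof -
    have yc: "y \<in> carrier G" using y unfolding N_def by simp
    define f where "f = (\<lambda>b. y \<otimes> b \<otimes> inv y)"
    have fA: "f ` A \<subseteq> A" using y unfolding N_def f_def by auto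
    have "inj_on f A"
    proof (rule inj_onI)
      fix b c assume bc: "b \<in> A" "c \<in> A" "f b = f c"
      then have "y \<otimes> b \<otimes> inv y = y \<otimes> c \<otimes> inv y" unfolding f_def by simp
      then have "y \<otimes> b = y \<otimes> c" using bc(1,2) Asub yc by (metis inv_closed m_closed r_cancel subsetD)
      then show "b = c" using bc(1,2) Asub yc by (metis l_cancel subsetD)
    qed
    then have "card (f ` A) = card A" by (rule card_image)
    then have "f ` A = A" using card_subset_eq[OF finA fA] by simp
    then obtain b where b: "b \<in> A" "a = f b" using a by (metis imageE)
    have bc: "b \<in> carrier G" using b(1) Asub by blast
    have "inv y \<otimes> a \<otimes> y = b" using b(2) bc yc unfolding f_def
      by (metis m_assoc l_inv r_inv l_one r_one inv_closed m_closed)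
    then show ?thesis using b(1) by simp
  qed
  have "subgroup N G"
  proof (rule subgroupI)
    show "N \<subseteq> carrier G" unfolding N_def by auto
    have "\<one> \<in> N" unfolding N_def using Asub by auto
    then show "N \<noteq> {}" by auto
  next
    fix y assume y: "y \<in> N"
    then have yc: "y \<in> carrier G" unfolding N_def by simp
    have "inv y \<otimes> a \<otimes> inv (inv y) \<in> A" if "a \<in> A" for a
      using Ninv[OF y that] yc by simp
    then show "inv y \<in> N" unfolding N_def using yc by simp
  next
    fix y z assume y: "y \<in> N" and z: "z \<in> N"
    then have yc: "y \<in> carrier G" and zc: "z \<in> carrier G" unfolding N_def by simp_all
    have "y \<otimes> z \<otimes> a \<otimes> inv (y \<otimes> z) \<in> A" if a: "a \<in> A" for a
    proof -
      have "z \<otimes> a \<otimes> inv z \<in> A" using z a unfolding N_def by simp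
      then have "y \<otimes> (z \<otimes> a \<otimes> inv z) \<otimes> inv y \<in> A" using y unfolding N_def by simp
      moreover have "y \<otimes> (z \<otimes> a \<otimes> inv z) \<otimes> inv y = y \<otimes> z \<otimes> a \<otimes> inv (y \<otimes> z)"
      proof -
        have ac: "a \<in> carrier G" using a Asub by blast
        show ?thesis using yc zc ac by (simp add: m_assoc inv_mult_group)
      qed
      ultimately show ?thesis by simp
    qed
    then show "y \<otimes> z \<in> N" unfolding N_def using yc zc by simp
  qed
  moreover have "A \<subseteq> N"
    unfolding N_def using Asub As(1) by (auto intro: subgroup.m_closed subgroup.m_inv_closed)
  ultimately have "N = A \<or> N = carrier G" using A unfolding maximal_subgroup_def by blast
  moreover have "x \<in> N" using x unfolding N_def by simp
  ultimately have "N = carrier G" using x(2) by blast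
  then have "\<forall>y\<in>carrier G. \<forall>a\<in>A. y \<otimes> a \<otimes> inv y \<in> A" unfolding N_def by blast
  then show ?thesis using As(1) normal_inv_iff by blast
qed

lemma maximal_card:
  assumes A: "maximal_subgroup A G"
  shows "card A = p ^ (m - 1)" "m \<ge> 1"
proof -
  have As: "subgroup A G" "A \<noteq> carrier G" using A unfolding maximal_subgroup_def by auto
  have Asub: "A \<subseteq> carrier G" using As(1) subgroup.subset by blast
  interpret N: normal A G using maximal_normal[OF A] .
  have GA: "group (G Mod A)" by (rule N.factorgroup_is_group)
  obtain k where k: "k \<le> m" "card A = p ^ k" using card_sub_pow[OF As(1)] by blast
  have "k \<noteq> m" using sub_card_full[OF As(1)] k As(2) by blast
  then have km: "k < m" using k by simp
  have "card (rcosets A) * p ^ k = p ^ m" using lagrange[OF As(1)] k ordG by simp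
  moreover have "p ^ m = p ^ (m - k) * p ^ k" using km by (simp add: power_add[symmetric])
  ultimately have cE: "card (rcosets A) = p ^ (m - k)" using p_gt1 by simp
  have oGA: "order (G Mod A) = card (rcosets A)" unfolding order_def FactGroup_def by simp
  have "m - k = 1"
  proof (rule ccontr)
    assume "m - k \<noteq> 1"
    then have mk2: "m - k \<ge> 2" using km by simp
    have "order (G Mod A) = p ^ 1 * p ^ (m - k - 1)"
    proof -
      have "m - k = Suc (m - k - 1)" using mk2 by simp
      then have "p ^ (m - k) = p ^ 1 * p ^ (m - k - 1)" by (metis power_Suc power_one_right)
      then show ?thesis using oGA cE by simp
    qed
    moreover have "finite (carrier (G Mod A))" using finite_rcosets[OF As(1)] by (simp add: FactGroup_def)
    ultimately obtain S where S: "subgroup S (G Mod A)" "card S = p ^ 1"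
      using sylow_thm[OF prime_p GA] by blast
    define K where "K = {y \<in> carrier G. A #> y \<in> S}"
    have SA: "A \<in> S" using subgroup.one_closed[OF S(1)] by simp
    have Scar: "S \<subseteq> rcosets A" using subgroup.subset[OF S(1)] by (simp add: FactGroup_def)
    have "subgroup K G"
    proof (rule subgroupI)
      show "K \<subseteq> carrier G" unfolding K_def by auto
      have "A #> \<one> = A" using Asub by simp
      then have "\<one> \<in> K" unfolding K_def using SA by simp
      then show "K \<noteq> {}" by auto
    next
      fix y assume y: "y \<in> K"
      then have yc: "y \<in> carrier G" and yS: "A #> y \<in> S" unfolding K_def by auto
      have "A #> y \<in> carrier (G Mod A)" using Asub yc by (simp add: FactGroup_def rcosetsI)
      then have "inv\<^bsub>G Mod A\<^esub> (A #> y) = A #> inv y"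
        using N.inv_FactGroup N.rcos_inv[OF yc] by simp
      moreover have "inv\<^bsub>G Mod A\<^esub> (A #> y) \<in> S" using subgroup.m_inv_closed[OF S(1) yS] .
      ultimately show "inv y \<in> K" unfolding K_def using yc by simp
    next
      fix y z assume y: "y \<in> K" and z: "z \<in> K"
      then have yc: "y \<in> carrier G" and zc: "z \<in> carrier G" and yS: "A #> y \<in> S" and zS: "A #> z \<in> S"
        unfolding K_def by auto
      have "(A #> y) \<otimes>\<^bsub>G Mod A\<^esub> (A #> z) \<in> S" using subgroup.m_closed[OF S(1) yS zS] .
      then have "A #> (y \<otimes> z) \<in> S" using N.rcos_sum[OF yc zc] by simp
      then show "y \<otimes> z \<in> K" unfolding K_def using yc zc by simp
    qed
    moreover have "A \<subseteq> K"
    proof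
      fix a assume a: "a \<in> A"
      then have ac: "a \<in> carrier G" using Asub by blast
      have "A #> a = A" using coset_join2[OF ac As(1) a] .
      then show "a \<in> K" unfolding K_def using ac SA by simp
    qed
    ultimately have KK: "K = A \<or> K = carrier G" using A unfolding maximal_subgroup_def by blast
    have "card S \<ge> 2" using S(2) p_gt1 by simp
    have "\<not> S \<subseteq> {A}"
    proof
      assume "S \<subseteq> {A}"
      then have "card S \<le> card {A}" by (intro card_mono) simp_all
      then show False using \<open>card S \<ge> 2\<close> by simp
    qed
    then obtain W where W: "W \<in> S" "W \<noteq> A" by blast
    then obtain y where y: "y \<in> carrier G" "W = A #> y" using Scar unfolding RCOSETS_def by auto
    have "y \<in> K" unfolding K_def using y W by simp
    moreover have "y \<notin> A" using coset_join2[OF y(1) As(1)] y W by auto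
    ultimately have "K \<noteq> A" by auto
    then have Kc: "K = carrier G" using KK by simp
    have "rcosets A \<subseteq> S"
    proof
      fix V assume "V \<in> rcosets A"
      then obtain z where z: "z \<in> carrier G" "V = A #> z" unfolding RCOSETS_def by auto
      then have "z \<in> K" using Kc by simp
      then show "V \<in> S" using z unfolding K_def by simp
    qed
    then have "card (rcosets A) \<le> card S"
      by (rule card_mono[OF finite_subset[OF Scar finite_rcosets[OF As(1)]]])
    then have "p ^ (m - k) \<le> p ^ 1" using cE S(2) by simp
    then have "m - k \<le> 1" by (rule power_le_imp_le_exp[OF p_gt1])
    then show False using mk2 by simp
  qed
  then have "k = m - 1" using km by simp
  then show "card A = p ^ (m - 1)" using k(2) by simp
  show "m \<ge> 1" using km by simp
qed

lemma coset_inter_bound: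
  assumes A: "subgroup A G" and C: "subgroup C G" and R: "R \<in> rcosets A"
  shows "card (C \<inter> R) \<le> card (C \<inter> A)"
proof (cases "C \<inter> R = {}")
  case True then show ?thesis by simp
next
  case False
  then obtain c0 where c0: "c0 \<in> C" "c0 \<in> R" by blast
  obtain x where x: "x \<in> carrier G" "R = A #> x" using R unfolding RCOSETS_def by auto
  have Asub: "A \<subseteq> carrier G" using subgroup.subset[OF A] .
  have Csub: "C \<subseteq> carrier G" using subgroup.subset[OF C] .
  have c0c: "c0 \<in> carrier G" using c0(1) Csub by blast
  obtain a2 where a2: "a2 \<in> A" "c0 = a2 \<otimes> x" using c0(2) x(2) unfolding r_coset_def by auto
  define f where "f = (\<lambda>y. y \<otimes> inv c0)"
  have "inj_on f (C \<inter> R)"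
  proof (rule inj_onI)
    fix y z assume yz: "y \<in> C \<inter> R" "z \<in> C \<inter> R" "f y = f z"
    then have "y \<otimes> inv c0 = z \<otimes> inv c0" unfolding f_def by simp
    then show "y = z" using yz(1,2) Csub c0c by (metis IntD1 inv_closed r_cancel subsetD)
  qed
  moreover have "f ` (C \<inter> R) \<subseteq> C \<inter> A"
  proof
    fix w assume "w \<in> f ` (C \<inter> R)"
    then obtain y where y: "y \<in> C" "y \<in> R" "w = y \<otimes> inv c0" unfolding f_def by auto
    obtain a1 where a1: "a1 \<in> A" "y = a1 \<otimes> x" using y(2) x(2) unfolding r_coset_def by auto
    have a1c: "a1 \<in> carrier G" and a2c: "a2 \<in> carrier G" using a1(1) a2(1) Asub by auto
    have "w = a1 \<otimes> x \<otimes> inv (a2 \<otimes> x)" using y(3) a1(2) a2(2) by simp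
    also have "\<dots> = a1 \<otimes> inv a2" using a1c a2c x(1)
      by (simp add: inv_mult_group m_assoc[symmetric]) (simp add: m_assoc)
    finally have "w \<in> A" using a1(1) a2(1) A by (simp add: subgroup.m_closed subgroup.m_inv_closed)
    moreover have "w \<in> C" using y(1,3) c0(1) C by (simp add: subgroup.m_closed subgroup.m_inv_closed)
    ultimately show "w \<in> C \<inter> A" by simp
  qed
  moreover have "finite (C \<inter> A)" using finite_sub[OF C] by simp
  ultimately show ?thesis by (rule card_inj_on_le)
qed

lemma product_bound:
  assumes A: "subgroup A G" and C: "subgroup C G"
  shows "card C \<le> card (rcosets A) * card (C \<inter> A)"
proof -
  have "C = (\<Union>R\<in>rcosets A. C \<inter> R)"
    using rcosets_part_G[OF A] subgroup.subset[OF C] by blast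
  then have "card C = card (\<Union>R\<in>rcosets A. C \<inter> R)" by simp
  also have "\<dots> \<le> (\<Sum>R\<in>rcosets A. card (C \<inter> R))" by (rule card_UN_le[OF finite_rcosets[OF A]])
  also have "\<dots> \<le> (\<Sum>R\<in>rcosets A. card (C \<inter> A))"
    by (rule sum_mono) (rule coset_inter_bound[OF A C])
  also have "\<dots> = card (rcosets A) * card (C \<inter> A)" by simp
  finally show ?thesis .
qed

end

locale pgroup3 = pgroup +
  assumes hZ: "order (G Mod group_center G) = p ^ 3"
begin

abbreviation "Z \<equiv> group_center G"

lemma pow_le_iff: "p ^ i \<le> p ^ j \<longleftrightarrow> i \<le> j"
  using p_gt1 by simp

lemma pow_eq_iff: "p ^ i = p ^ j \<longleftrightarrow> i = j"
  using p_gt1 by simp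

lemma Z_card: "card Z = p ^ (m - 3)" "m \<ge> 3"
proof -
  have "order (G Mod Z) = card (rcosets Z)" unfolding order_def FactGroup_def by simp
  then have "p ^ 3 * card Z = p ^ m" using lagrange[OF center_subgroup] hZ ordG by simp
  moreover obtain j where j: "card Z = p ^ j" using card_sub_pow[OF center_subgroup] by blast
  ultimately have "p ^ (3 + j) = p ^ m" by (simp add: power_add)
  then have "3 + j = m" using pow_eq_iff by blast
  then show "card Z = p ^ (m - 3)" "m \<ge> 3" using j by auto
qed

lemma p_pow_split: "p ^ (m - 2) = p * p ^ (m - 3)" "p ^ (m - 1) = p * p ^ (m - 2)" "p ^ m = p * p ^ (m - 1)"
proof -
  have "m - 2 = Suc (m - 3)" "m - 1 = Suc (m - 2)" "m = Suc (m - 1)" using Z_card(2) by auto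
  then show "p ^ (m - 2) = p * p ^ (m - 3)" "p ^ (m - 1) = p * p ^ (m - 2)" "p ^ m = p * p ^ (m - 1)"
    by (metis power_Suc)+
qed

lemma card_carrier: "card (carrier G) = p ^ m" using ordG by (simp add: order_def)

lemma noncentral_card:
  assumes g: "g \<in> carrier G" "g \<notin> Z"
  shows "card (cent G g) = p ^ (m - 2) \<or> card (cent G g) = p ^ (m - 1)"
proof -
  have C: "subgroup (cent G g) G" using cent_subgroup[OF g(1)] .
  have "Z \<noteq> cent G g" using self_in_cent[OF g(1)] g(2) by blast
  then have "p * card Z \<le> card (cent G g)"
    using sub_strict[OF center_subgroup C center_sub_cent[OF g(1)]] by blast
  then have l: "p ^ (m - 2) \<le> card (cent G g)" using Z_card p_pow_split by simp
  have "cent G g \<noteq> carrier G" using cent_eq_carrier_iff[OF g(1)] g(2) by blast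
  then have "p * card (cent G g) \<le> card (carrier G)"
    using sub_strict[OF C subgroup_self subgroup.subset[OF C]] by blast
  then have u: "p * card (cent G g) \<le> p ^ m" using card_carrier by simp
  obtain k where k: "card (cent G g) = p ^ k" using card_sub_pow[OF C] by blast
  have "m - 2 \<le> k" using l k pow_le_iff by simp
  moreover have "p ^ Suc k \<le> p ^ m" using u k by simp
  then have "Suc k \<le> m" using pow_le_iff by blast
  ultimately have "k = m - 2 \<or> k = m - 1" by linarith
  then show ?thesis using k by auto
qed

lemma central_card: "g \<in> Z \<Longrightarrow> card (cent G g) = p ^ m"
proof -
  assume g: "g \<in> Z"
  then have gc: "g \<in> carrier G" unfolding group_center_def by simp
  then show ?thesis using cent_eq_carrier_iff[OF gc] g card_carrier by simp
qed

lemma big_cent_max_abelian: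
  assumes g: "g \<in> carrier G" and cg: "card (cent G g) = p ^ (m - 1)"
  shows "maximal_subgroup (cent G g) G \<and> abelian_subset (cent G g) G"
proof -
  let ?H = "cent G g"
  have H: "subgroup ?H G" using cent_subgroup[OF g] .
  have Hsub: "?H \<subseteq> carrier G" using subgroup.subset[OF H] .
  have lt: "p ^ (m - 1) < p ^ m" using p_pow_split(3) p_gt1 by simp
  have Hne: "?H \<noteq> carrier G" using cg card_carrier lt by auto
  have "maximal_subgroup ?H G"
    unfolding maximal_subgroup_def
  proof (intro conjI allI impI)
    show "subgroup ?H G" by (rule H)
    show "?H \<noteq> carrier G" by (rule Hne)
  next
    fix K assume K: "subgroup K G \<and> ?H \<subseteq> K"
    show "K = ?H \<or> K = carrier G"
    proof (cases "K = ?H")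
      case False
      then have "p * card ?H \<le> card K" using sub_strict[OF H] K by metis
      then have "p ^ m \<le> card K" using cg p_pow_split(3) by simp
      moreover have "card K \<le> p ^ m"
        using card_mono[OF fin subgroup.subset] K card_carrier by metis
      ultimately have "card K = p ^ m" by simp
      then show ?thesis using sub_card_full K by blast
    qed simp
  qed
  moreover have "abelian_subset ?H G"
    unfolding abelian_subset_def
  proof (intro ballI)
    fix x y assume x: "x \<in> ?H" and y: "y \<in> ?H"
    let ?ZH = "?H \<inter> CS G ?H"
    have ZH: "subgroup ?ZH G" using subgroups_Inter_pair[OF H CS_subgroup[OF Hsub]] .
    have gnZ: "g \<notin> Z"
    proof
      assume "g \<in> Z" then have "card ?H = p ^ m" by (rule central_card)
      then show False using cg lt by simp
    qed
    have ZZH: "Z \<subseteq> ?ZH"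
    proof
      fix z assume z: "z \<in> Z"
      then have zH: "z \<in> ?H" using center_sub_cent[OF g] by blast
      have zc: "z \<in> carrier G" and zcomm: "\<forall>s\<in>carrier G. z \<otimes> s = s \<otimes> z"
        using z unfolding group_center_def by simp_all
      have "\<forall>s\<in>?H. z \<otimes> s = s \<otimes> z" using zcomm Hsub by blast
      then have "z \<in> CS G ?H" using zc unfolding CS_def by simp
      then show "z \<in> ?ZH" using zH by simp
    qed
    have gZH: "g \<in> ?ZH"
    proof -
      have "g \<otimes> h = h \<otimes> g" if "h \<in> ?H" for h
      proof -
        have "h \<otimes> g = g \<otimes> h" using that unfolding cent_def by simp
        then show ?thesis by (rule sym)
      qed
      then show ?thesis using g self_in_cent[OF g] unfolding CS_def by simp
    qed
    have "Z \<noteq> ?ZH" using gZH gnZ by blast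
    then have "p * card Z \<le> card ?ZH" using sub_strict[OF center_subgroup ZH ZZH] by blast
    then have ZHc: "p ^ (m - 2) \<le> card ?ZH" using Z_card p_pow_split by simp
    show "x \<otimes> y = y \<otimes> x"
    proof (cases "x \<in> ?ZH")
      case True then show ?thesis using y unfolding CS_def by simp
    next
      case False
      have xc: "x \<in> carrier G" using x Hsub by blast
      let ?Cx = "?H \<inter> cent G x"
      have Cx: "subgroup ?Cx G" using subgroups_Inter_pair[OF H cent_subgroup[OF xc]] .
      have sub1: "?ZH \<subseteq> ?Cx"
      proof
        fix z assume z: "z \<in> ?ZH"
        then have "z \<otimes> x = x \<otimes> z" using x unfolding CS_def by simp
        then show "z \<in> ?Cx" using z unfolding cent_def CS_def by simp
      qed
      have "x \<in> ?Cx" using x self_in_cent[OF xc] by simp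
      then have "?ZH \<noteq> ?Cx" using False by blast
      then have "p * card ?ZH \<le> card ?Cx" using sub_strict[OF ZH Cx sub1] by blast
      then have "p ^ (m - 1) \<le> card ?Cx" using ZHc p_pow_split(2)
        by (metis le_trans mult_le_mono2)
      moreover have "card ?Cx \<le> card ?H" using finite_sub[OF H] by (intro card_mono) auto
      ultimately have "card ?Cx = card ?H" using cg by simp
      then have "?Cx = ?H" using sub_card_eq[OF Cx H] by blast
      then have "y \<in> cent G x" using y by blast
      then show ?thesis unfolding cent_def by simp
    qed
  qed
  ultimately show ?thesis by blast
qed


lemma case2_struct:
  assumes Am: "maximal_subgroup A G" and Aa: "abelian_subset A G"
  shows "Z \<subseteq> A" "card A = p ^ (m - 1)"
    "\<And>g. g \<in> A - Z \<Longrightarrow> card (cent G g) = p ^ (m - 1)"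
    "\<And>g. g \<in> carrier G - A \<Longrightarrow> card (cent G g) = p ^ (m - 2)"
proof -
  have As: "subgroup A G" "A \<noteq> carrier G" using Am unfolding maximal_subgroup_def by auto
  have Asub: "A \<subseteq> carrier G" using subgroup.subset[OF As(1)] .
  have maxA: "K = A \<or> K = carrier G" if "subgroup K G" "A \<subseteq> K" for K
    using Am that unfolding maximal_subgroup_def by blast
  have Acent: "A \<subseteq> cent G a" if a: "a \<in> A" for a
  proof
    fix x assume x: "x \<in> A"
    then have "x \<otimes> a = a \<otimes> x" using Aa a unfolding abelian_subset_def by blast
    then show "x \<in> cent G a" using x Asub unfolding cent_def by blast
  qed
  have centA: "cent G a = A" if a: "a \<in> A" "a \<notin> Z" for a
  proof -
    have ac: "a \<in> carrier G" using a(1) Asub by blast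
    have "cent G a \<noteq> carrier G" using cent_eq_carrier_iff[OF ac] a(2) by blast
    then show ?thesis using maxA[OF cent_subgroup[OF ac] Acent[OF a(1)]] by blast
  qed
  have Zne: "Z \<noteq> carrier G"
  proof
    assume "Z = carrier G"
    then have "p ^ (m - 3) = p ^ m" using Z_card card_carrier by simp
    then show False using pow_eq_iff Z_card(2) by simp
  qed
  have "\<exists>a\<in>A. a \<notin> Z"
  proof (rule ccontr)
    assume "\<not> (\<exists>a\<in>A. a \<notin> Z)"
    then have AZ: "A \<subseteq> Z" by blast
    then have ZA: "Z = A" using maxA[OF center_subgroup AZ] Zne by blast
    obtain g where g: "g \<in> carrier G" "g \<notin> A" using As Asub by blast
    have gZ: "g \<notin> Z" using g(2) ZA by simp
    have "A \<subseteq> cent G g" using center_sub_cent[OF g(1)] ZA by simp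
    moreover have "cent G g \<noteq> carrier G" using cent_eq_carrier_iff[OF g(1)] gZ by blast
    ultimately have "cent G g = A" using maxA[OF cent_subgroup[OF g(1)]] by blast
    then show False using self_in_cent[OF g(1)] g(2) by simp
  qed
  then obtain a where a: "a \<in> A" "a \<notin> Z" by blast
  show ZA: "Z \<subseteq> A"
    using center_sub_cent[of a] a Asub centA[OF a] by blast
  show cA: "card A = p ^ (m - 1)" by (rule maximal_card(1)[OF Am])
  show "card (cent G g) = p ^ (m - 1)" if g: "g \<in> A - Z" for g
    using centA[of g] g cA by simp
  show "card (cent G g) = p ^ (m - 2)" if g: "g \<in> carrier G - A" for g
  proof -
    have gc: "g \<in> carrier G" and gA: "g \<notin> A" using g by auto
    have gZ: "g \<notin> Z" using gA ZA by blast
    let ?C = "cent G g"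
    have C: "subgroup ?C G" using cent_subgroup[OF gc] .
    show ?thesis
    proof (rule ccontr)
      assume "card ?C \<noteq> p ^ (m - 2)"
      then have cC: "card ?C = p ^ (m - 1)" using noncentral_card[OF gc gZ] by blast
      have CAZ: "?C \<inter> A \<subseteq> Z"
      proof
        fix x assume x: "x \<in> ?C \<inter> A"
        have xc: "x \<in> carrier G" using x Asub by blast
        have "x \<otimes> g = g \<otimes> x" using x unfolding cent_def by simp
        then have "g \<otimes> x = x \<otimes> g" by (rule sym)
        then have gx: "g \<in> cent G x" using gc unfolding cent_def by simp
        have "cent G x = A \<or> cent G x = carrier G"
          using maxA[OF cent_subgroup[OF xc] Acent] x by blast
        then have "cent G x = carrier G" using gx gA by blast
        then show "x \<in> Z" using cent_eq_carrier_iff[OF xc] by blast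
      qed
      have "card (?C \<inter> A) \<le> card Z"
        using card_mono[OF finite_sub[OF center_subgroup] CAZ] .
      then have i: "card (?C \<inter> A) \<le> p ^ (m - 3)" using Z_card by simp
      have "card (rcosets A) * p ^ (m - 1) = p * p ^ (m - 1)"
        using lagrange[OF As(1)] cA ordG p_pow_split(3) by simp
      then have rA: "card (rcosets A) = p" using p_gt1 by simp
      have "card ?C \<le> card (rcosets A) * card (?C \<inter> A)" by (rule product_bound[OF As(1) C])
      also have "\<dots> \<le> p * p ^ (m - 3)" using rA i by simp
      finally have "p ^ (m - 1) \<le> p ^ (m - 2)" using cC p_pow_split(1) by simp
      then show False using pow_le_iff Z_card(2) by simp
    qed
  qed
qed


definition "T1 = {g \<in> carrier G - Z. card (cent G g) = p ^ (m - 1)}"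
definition "T2 = {g \<in> carrier G - Z. card (cent G g) = p ^ (m - 2)}"

lemma partition_sets:
  "carrier G = Z \<union> T1 \<union> T2" "Z \<inter> T1 = {}" "(Z \<union> T1) \<inter> T2 = {}"
proof -
  have Zc: "Z \<subseteq> carrier G" unfolding group_center_def by auto
  have "g \<in> Z \<union> T1 \<union> T2" if g: "g \<in> carrier G" for g
  proof (cases "g \<in> Z")
    case True then show ?thesis by simp
  next
    case False
    then have "card (cent G g) = p ^ (m - 2) \<or> card (cent G g) = p ^ (m - 1)"
      using noncentral_card[OF g] by blast
    then show ?thesis
    proof
      assume "card (cent G g) = p ^ (m - 2)"
      then have "g \<in> T2" unfolding T2_def using g False by simp
      then show ?thesis by simp
    next
      assume "card (cent G g) = p ^ (m - 1)"
      then have "g \<in> T1" unfolding T1_def using g False by simp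
      then show ?thesis by simp
    qed
  qed
  moreover have "T1 \<subseteq> carrier G" "T2 \<subseteq> carrier G" unfolding T1_def T2_def by auto
  ultimately show "carrier G = Z \<union> T1 \<union> T2" using Zc by blast
  show "Z \<inter> T1 = {}" unfolding T1_def by auto
  have "p ^ (m - 1) \<noteq> p ^ (m - 2)" using pow_eq_iff Z_card(2) by simp
  then show "(Z \<union> T1) \<inter> T2 = {}" unfolding T1_def T2_def by auto
qed

lemma finite_parts: "finite Z" "finite T1" "finite T2"
proof -
  have "Z \<subseteq> carrier G" unfolding group_center_def by auto
  then show "finite Z" using fin by (rule finite_subset)
  have "T1 \<subseteq> carrier G" unfolding T1_def by auto
  then show "finite T1" using fin by (rule finite_subset)
  have "T2 \<subseteq> carrier G" unfolding T2_def by auto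
  then show "finite T2" using fin by (rule finite_subset)
qed

lemma card_parts: "real (card Z) + real (card T1) + real (card T2) = real p ^ m"
proof -
  have "card (carrier G) = card (Z \<union> T1) + card T2"
    using partition_sets finite_parts by (simp add: card_Un_disjoint)
  also have "\<dots> = card Z + card T1 + card T2"
    using partition_sets finite_parts by (simp add: card_Un_disjoint)
  finally have "card Z + card T1 + card T2 = p ^ m" using card_carrier by simp
  then have "real (card Z + card T1 + card T2) = real (p ^ m)" by (rule arg_cong)
  then show ?thesis by simp
qed

lemma series_partition:
  "A_series G = fps_const (1 / real p ^ m) *
     (fps_const (real (card Z)) * geom (real p ^ m) + fps_const (real (card T1)) * geom (real p ^ (m - 1))
      + fps_const (real (card T2)) * geom (real p ^ (m - 2)))"
proof (rule series3)
  fix n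
  let ?f = "\<lambda>g. real (card (cent G g)) ^ n"
  have "alpha G n * order G = (\<Sum>g\<in>carrier G. card (cent G g) ^ n)" by (rule alpha_burnside[OF fin])
  then have "real (alpha G n * order G) = real (\<Sum>g\<in>carrier G. card (cent G g) ^ n)" by (rule arg_cong)
  then have "real (alpha G n) * real p ^ m = (\<Sum>g\<in>carrier G. ?f g)"
    using ordG by (simp add: of_nat_sum)
  also have "(\<Sum>g\<in>carrier G. ?f g) = (\<Sum>g\<in>Z \<union> T1 \<union> T2. ?f g)"
    using partition_sets(1) by simp
  also have "\<dots> = (\<Sum>g\<in>Z \<union> T1. ?f g) + (\<Sum>g\<in>T2. ?f g)"
    by (rule sum.union_disjoint) (use partition_sets finite_parts in auto)
  also have "(\<Sum>g\<in>Z \<union> T1. ?f g) = (\<Sum>g\<in>Z. ?f g) + (\<Sum>g\<in>T1. ?f g)"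
    by (rule sum.union_disjoint) (use partition_sets finite_parts in auto)
  also have "(\<Sum>g\<in>Z. ?f g) = (\<Sum>g\<in>Z. (real p ^ m) ^ n)"
    by (rule sum.cong) (simp_all add: central_card)
  also have "\<dots> = real (card Z) * (real p ^ m) ^ n" by simp
  also have "(\<Sum>g\<in>T1. ?f g) = (\<Sum>g\<in>T1. (real p ^ (m - 1)) ^ n)"
    by (rule sum.cong) (simp_all add: T1_def)
  also have "\<dots> = real (card T1) * (real p ^ (m - 1)) ^ n" by simp
  also have "(\<Sum>g\<in>T2. ?f g) = (\<Sum>g\<in>T2. (real p ^ (m - 2)) ^ n)"
    by (rule sum.cong) (simp_all add: T2_def)
  also have "\<dots> = real (card T2) * (real p ^ (m - 2)) ^ n" by simp
  finally have "real (alpha G n) * real p ^ m = real (card Z) * (real p ^ m) ^ n +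
      real (card T1) * (real p ^ (m - 1)) ^ n + real (card T2) * (real p ^ (m - 2)) ^ n" .
  moreover have "real p ^ m > 0" using p_gt1 by simp
  ultimately show "A_series G $ n = (real (card Z) * (real p ^ m) ^ n +
      real (card T1) * (real p ^ (m - 1)) ^ n + real (card T2) * (real p ^ (m - 2)) ^ n) / real p ^ m"
    unfolding A_series_def by (simp add: field_simps)
qed

lemma main:
  shows "(\<not> (\<exists>H. maximal_subgroup H G \<and> abelian_subset H G) \<longrightarrow>
           A_series G = fps_const (1 / real p ^ m) *
             (fps_const (real p ^ (m - 3)) * geom (real p ^ m)
              + fps_const (real p ^ m - real p ^ (m - 3)) * geom (real p ^ (m - 2))))
       \<and> ((\<exists>H. maximal_subgroup H G \<and> abelian_subset H G) \<longrightarrow>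
           A_series G = fps_const (1 / real p ^ m) *
             (fps_const (real p ^ (m - 3)) * geom (real p ^ m)
              + fps_const (real p ^ (m - 1) - real p ^ (m - 3)) * geom (real p ^ (m - 1))
              + fps_const (real p ^ m - real p ^ (m - 1)) * geom (real p ^ (m - 2))))"
proof (intro conjI impI)
  have cZ: "real (card Z) = real p ^ (m - 3)" using Z_card by simp
  assume nA: "\<not> (\<exists>H. maximal_subgroup H G \<and> abelian_subset H G)"
  have "T1 = {}"
  proof (rule ccontr)
    assume "T1 \<noteq> {}"
    then obtain g where g: "g \<in> T1" by blast
    then have "g \<in> carrier G" "card (cent G g) = p ^ (m - 1)" unfolding T1_def by auto
    then show False using big_cent_max_abelian nA by blast
  qed
  then have c1: "real (card T1) = 0" by simp
  then have c2: "real (card T2) = real p ^ m - real p ^ (m - 3)" using card_parts cZ by simp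
  show "A_series G = fps_const (1 / real p ^ m) *
             (fps_const (real p ^ (m - 3)) * geom (real p ^ m)
              + fps_const (real p ^ m - real p ^ (m - 3)) * geom (real p ^ (m - 2)))"
    using series_partition unfolding cZ c1 c2 by simp
next
  have cZ: "real (card Z) = real p ^ (m - 3)" using Z_card by simp
  assume "\<exists>H. maximal_subgroup H G \<and> abelian_subset H G"
  then obtain A where A: "maximal_subgroup A G" "abelian_subset A G" by blast
  note S = case2_struct[OF A]
  have As: "subgroup A G" using A(1) unfolding maximal_subgroup_def by blast
  have Asub: "A \<subseteq> carrier G" using subgroup.subset[OF As] .
  have "T1 = A - Z"
  proof
    show "A - Z \<subseteq> T1" unfolding T1_def using S(3) Asub by auto
    show "T1 \<subseteq> A - Z"
    proof
      fix g assume g: "g \<in> T1"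
      then have gc: "g \<in> carrier G" "g \<notin> Z" "card (cent G g) = p ^ (m - 1)" unfolding T1_def by auto
      have "p ^ (m - 1) \<noteq> p ^ (m - 2)" using pow_eq_iff Z_card(2) by simp
      then have "g \<in> A"
      proof -
        assume ne: "p ^ (m - 1) \<noteq> p ^ (m - 2)"
        show "g \<in> A"
        proof (rule ccontr)
          assume "g \<notin> A"
          then have "card (cent G g) = p ^ (m - 2)" using S(4)[of g] gc(1) by blast
          then show False using gc(3) ne by simp
        qed
      qed
      then show "g \<in> A - Z" using gc by simp
    qed
  qed
  moreover have "card A = card Z + card (A - Z)"
  proof -
    have "card (A - Z) = card A - card Z" by (rule card_Diff_subset[OF finite_parts(1) S(1)])
    moreover have "card Z \<le> card A" by (rule card_mono[OF finite_sub[OF As] S(1)])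
    ultimately show ?thesis by simp
  qed
  ultimately have "card T1 + p ^ (m - 3) = p ^ (m - 1)"
    using S(2) Z_card by simp
  then have "real (card T1 + p ^ (m - 3)) = real (p ^ (m - 1))" by (rule arg_cong)
  then have c1: "real (card T1) = real p ^ (m - 1) - real p ^ (m - 3)" by simp
  then have c2: "real (card T2) = real p ^ m - real p ^ (m - 1)" using card_parts cZ by simp
  show "A_series G = fps_const (1 / real p ^ m) *
             (fps_const (real p ^ (m - 3)) * geom (real p ^ m)
              + fps_const (real p ^ (m - 1) - real p ^ (m - 3)) * geom (real p ^ (m - 1))
              + fps_const (real p ^ m - real p ^ (m - 1)) * geom (real p ^ (m - 2)))"
    using series_partition unfolding cZ c1 c2 .
qed

end


theorem theorem7p3:
  fixes G :: "('a, 'b) monoid_scheme" and p m :: nat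
  assumes "group G" and "Factorial_Ring.prime p" and "finite (carrier G)"
    and "order G = p ^ m"
    and "order (G Mod group_center G) = p ^ 3"
  shows "(\<not> (\<exists>H. maximal_subgroup H G \<and> abelian_subset H G) \<longrightarrow>
           A_series G = fps_const (1 / real p ^ m) *
             (fps_const (real p ^ (m - 3)) * geom (real p ^ m)
              + fps_const (real p ^ m - real p ^ (m - 3)) * geom (real p ^ (m - 2))))
       \<and> ((\<exists>H. maximal_subgroup H G \<and> abelian_subset H G) \<longrightarrow>
           A_series G = fps_const (1 / real p ^ m) *
             (fps_const (real p ^ (m - 3)) * geom (real p ^ m)
              + fps_const (real p ^ (m - 1) - real p ^ (m - 3)) * geom (real p ^ (m - 1))
              + fps_const (real p ^ m - real p ^ (m - 1)) * geom (real p ^ (m - 2))))"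
proof -
  interpret P: pgroup3 G p m
    by (intro pgroup3.intro pgroup.intro pgroup_axioms.intro pgroup3_axioms.intro) (simp_all add: assms)
  show ?thesis by (rule P.main)
qed

end
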